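(* Let $B=(\vec{e}_{\vec{k}(1)},\dots,\vec{e}_{\vec{k}(d)})$ be basis blades of $\mathcal{G}^{p,q}$, let $\vec{A}=\sum_{\vec{j}}a_{\vec{j}}\vec{e}_{\vec{j}}\in\mathcal{G}^{p,q}$, and for $\vec{l}\in\{0,1\}^d$ define $\vec c^{\vec{l}}(B)=\bigcap_{\nu=1}^d\vec c^{l_\nu}(\vec{e}_{\vec{k}(\nu)})$. Then the sets $\vec c^{\vec l}(B)$, $\vec l\in\{0,1\}^d$, are pairwise disjoint with union the set of all multi-indices $\vec j\subseteq\{1,\dots,n\}$, and for every $\vec l\in\{0,1\}^d$, $$\vec{A}_{\vec c^{\vec{l}}(B)}=\sum_{\vec{j}\in\vec c^{\vec{l}}(B)}a_{\vec{j}}\vec{e}_{\vec{j}}.$$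
   Context: $\mathcal{G}^{p,q}$ ($n=p+q$) is the real geometric algebra generated by orthonormal $\vec e_1,\dots,\vec e_n$ with $\vec e_j^2=1$ ($j\le p$), $\vec e_j^2=-1$ ($j>p$), $\vec e_j\vec e_k=-\vec e_k\vec e_j$ ($j\neq k$); $\vec e_{\vec j}=\vec e_{j_1}\cdots\vec e_{j_\iota}$ for $\vec j=\{j_1<\dots<j_\iota\}$, $\vec e_\emptyset=1$. For a basis blade $\vec e_{\vec k}$: $\vec c^0(\vec{e}_{\vec{k}})=\{\vec{j}:|\vec j||\vec k|-|\vec j\cap\vec k|\text{ even}\}$, $\vec c^1(\vec{e}_{\vec{k}})=\{\vec{j}:|\vec j||\vec k|-|\vec j\cap\vec k|\text{ odd}\}$. For invertible $\vec B$: $\vec{A}_{\vec c^0(\vec{B})}=\frac12(\vec{A}+\vec{B}^{-1}\vec{A}\vec{B})$, $\vec{A}_{\vec c^1(\vec{B})}=\frac12(\vec{A}-\vec{B}^{-1}\vec{A}\vec{B})$, and for a tuple $(\vec B_1,\dots,\vec B_d)$ and $\vec l\in\{0,1\}^d$: $\vec{A}_{\vec c^{\vec{l}}(\vec B_1,\dots,\vec B_d)}=((\vec{A}_{\vec c^{l_1}(\vec{B}_1)})_{\vec c^{l_2}(\vec{B}_2)}\cdots)_{\vec c^{l_d}(\vec{B}_d)}$. *)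

theory Defs
  imports Complex_Main
begin

text \<open>A multivector is represented by its coefficient function on multi-indices
  (subsets of {1..n}); the coefficient of the basis blade e_J is A J.\<close>

type_synonym mvec = "nat set \<Rightarrow> real"

definition ga_dim :: "nat \<Rightarrow> nat \<Rightarrow> nat" where
  "ga_dim p q = p + q"

definition multi_indices :: "nat \<Rightarrow> nat \<Rightarrow> nat set set" where
  "multi_indices p q = Pow {1..ga_dim p q}"

definition mvecs :: "nat \<Rightarrow> nat \<Rightarrow> mvec set" where
  "mvecs p q = {A. \<forall>S. S \<notin> multi_indices p q \<longrightarrow> A S = 0}"

definition blade :: "nat set \<Rightarrow> mvec" where
  "blade J = (\<lambda>S. if S = J then 1 else 0)"

definition gen_sq :: "nat \<Rightarrow> nat \<Rightarrow> real" where
  "gen_sq p j = (if j \<le> p then 1 else -1)"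

text \<open>e_J e_K = blade_sign p J K * e_{J \<triangle> K}: reorder the generators
  (one sign per inversion) and contract equal generators using their squares.\<close>
definition blade_sign :: "nat \<Rightarrow> nat set \<Rightarrow> nat set \<Rightarrow> real" where
  "blade_sign p J K =
     (-1) ^ card {(j, k). j \<in> J \<and> k \<in> K \<and> k < j} * (\<Prod>i\<in>J \<inter> K. gen_sq p i)"

definition gp :: "nat \<Rightarrow> nat \<Rightarrow> mvec \<Rightarrow> mvec \<Rightarrow> mvec" where
  "gp p q A B = (\<lambda>S. \<Sum>J\<in>multi_indices p q. \<Sum>K\<in>multi_indices p q.
      if (J - K) \<union> (K - J) = S then A J * B K * blade_sign p J K else 0)"

definition mv_inv :: "nat \<Rightarrow> nat \<Rightarrow> mvec \<Rightarrow> mvec" where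
  "mv_inv p q B = (THE X. X \<in> mvecs p q \<and> gp p q X B = blade {} \<and> gp p q B X = blade {})"

text \<open>A_{c^l(B)} = 1/2 (A + B^{-1} A B) for l = 0, 1/2 (A - B^{-1} A B) for l = 1.\<close>
definition proj :: "nat \<Rightarrow> nat \<Rightarrow> nat \<Rightarrow> mvec \<Rightarrow> mvec \<Rightarrow> mvec" where
  "proj p q l B A = (\<lambda>S. (A S + (if l = 0 then 1 else -1) *
      gp p q (gp p q (mv_inv p q B) A) B S) / 2)"

definition proj_tuple :: "nat \<Rightarrow> nat \<Rightarrow> mvec list \<Rightarrow> nat list \<Rightarrow> mvec \<Rightarrow> mvec" where
  "proj_tuple p q Bs ls A = fold (\<lambda>(B, l) X. proj p q l B X) (zip Bs ls) A"

definition cset :: "nat \<Rightarrow> nat \<Rightarrow> nat set \<Rightarrow> nat \<Rightarrow> nat set set" where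
  "cset p q K l = {J \<in> multi_indices p q.
      (int (card J * card K) - int (card (J \<inter> K))) mod 2 = int l}"

definition cset_tuple :: "nat \<Rightarrow> nat \<Rightarrow> nat set list \<Rightarrow> nat list \<Rightarrow> nat set set" where
  "cset_tuple p q ks ls = {J \<in> multi_indices p q.
      \<forall>\<nu><length ks. J \<in> cset p q (ks ! \<nu>) (ls ! \<nu>)}"

end

theory Submission
  imports Defs
begin

definition invc :: "nat set \<Rightarrow> nat set \<Rightarrow> nat" where
  "invc J K = card {(j, k). j \<in> J \<and> k \<in> K \<and> k < j}"

lemma invc_swap:
  assumes "finite J" "finite K"
  shows "invc J K + invc K J + card (J \<inter> K) = card J * card K"
proof -
  let ?P = "{(j, k). j \<in> J \<and> k \<in> K \<and> k < j}"
  let ?Q = "{(j, k). j \<in> J \<and> k \<in> K \<and> j < k}"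
  let ?D = "{(j, k). j \<in> J \<and> k \<in> K \<and> j = k}"
  have fin: "finite (J \<times> K)" using assms by simp
  have eq: "J \<times> K = ?P \<union> ?Q \<union> ?D" by auto
  have fP: "finite ?P" by (rule finite_subset[OF _ fin]) auto
  have fQ: "finite ?Q" by (rule finite_subset[OF _ fin]) auto
  have fD: "finite ?D" by (rule finite_subset[OF _ fin]) auto
  have "card (J \<times> K) = card ?P + card ?Q + card ?D"
    unfolding eq
    using fP fQ fD by (subst card_Un_disjoint, auto)+
  moreover have "card ?Q = invc K J"
  proof -
    have "?Q = prod.swap ` {(j, k). j \<in> K \<and> k \<in> J \<and> k < j}" by auto
    then show ?thesis unfolding invc_def by (simp add: card_image)
  qed
  moreover have "card ?D = card (J \<inter> K)"
  proof -
    have "?D = (\<lambda>x. (x, x)) ` (J \<inter> K)" by auto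
    moreover have "inj_on (\<lambda>x. (x, x)) (J \<inter> K)" by (auto simp: inj_on_def)
    ultimately show ?thesis by (simp add: card_image)
  qed
  ultimately show ?thesis using assms by (simp add: invc_def card_cartesian_product)
qed

lemma invc_un1:
  assumes "finite J1" "finite J2" "finite K" "J1 \<inter> J2 = {}"
  shows "invc (J1 \<union> J2) K = invc J1 K + invc J2 K"
proof -
  have fin: "finite ((J1 \<union> J2) \<times> K)" using assms by simp
  have "{(j, k). j \<in> J1 \<union> J2 \<and> k \<in> K \<and> k < j} =
     {(j, k). j \<in> J1 \<and> k \<in> K \<and> k < j} \<union> {(j, k). j \<in> J2 \<and> k \<in> K \<and> k < j}" by auto
  moreover have "finite {(j, k). j \<in> J1 \<and> k \<in> K \<and> k < j}"
    by (rule finite_subset[OF _ fin]) auto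
  moreover have "finite {(j, k). j \<in> J2 \<and> k \<in> K \<and> k < j}"
    by (rule finite_subset[OF _ fin]) auto
  ultimately show ?thesis unfolding invc_def using assms(4)
    by (subst card_Un_disjoint[symmetric]) auto
qed

lemma invc_un2:
  assumes "finite K1" "finite K2" "finite J" "K1 \<inter> K2 = {}"
  shows "invc J (K1 \<union> K2) = invc J K1 + invc J K2"
proof -
  have fin: "finite (J \<times> (K1 \<union> K2))" using assms by simp
  have "{(j, k). j \<in> J \<and> k \<in> K1 \<union> K2 \<and> k < j} =
     {(j, k). j \<in> J \<and> k \<in> K1 \<and> k < j} \<union> {(j, k). j \<in> J \<and> k \<in> K2 \<and> k < j}" by auto
  moreover have "finite {(j, k). j \<in> J \<and> k \<in> K1 \<and> k < j}"
    by (rule finite_subset[OF _ fin]) auto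
  moreover have "finite {(j, k). j \<in> J \<and> k \<in> K2 \<and> k < j}"
    by (rule finite_subset[OF _ fin]) auto
  ultimately show ?thesis unfolding invc_def using assms(4)
    by (subst card_Un_disjoint[symmetric]) auto
qed

lemma sign_eq: "blade_sign p J K = (-1) ^ invc J K * (\<Prod>i\<in>J \<inter> K. gen_sq p i)"
  unfolding blade_sign_def invc_def by simp

lemma exp_identity:
  assumes "finite S" "finite K"
  shows "invc K K + (card S * card K - card (S \<inter> K)) =
         invc K S + invc ((S - K) \<union> (K - S)) K + 2 * invc (S \<inter> K) K"
proof -
  have f: "finite (S \<inter> K)" "finite (S - K)" "finite (K - S)" using assms by auto
  have a1: "invc K S = invc K (S \<inter> K) + invc K (S - K)"
    proof -
    have "S = (S \<inter> K) \<union> (S - K)" "(S \<inter> K) \<inter> (S - K) = {}" by auto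
    then show ?thesis using invc_un2[OF f(1) f(2) assms(2)] by metis
  qed
  have a2: "invc ((S - K) \<union> (K - S)) K = invc (S - K) K + invc (K - S) K"
    using invc_un1[OF f(2) f(3) assms(2)] by auto
  have a3: "invc K K = invc (S \<inter> K) K + invc (K - S) K"
    using invc_un1[OF f(1) f(3) assms(2)] by (auto simp: Int_commute Int_Diff_Un)
  have s1: "invc K (S - K) + invc (S - K) K = card K * card (S - K)"
    using invc_swap[OF assms(2) f(2)] by (simp add: Int_commute)
  have s2: "invc K (S \<inter> K) + invc (S \<inter> K) K + card (S \<inter> K) = card K * card (S \<inter> K)"
    using invc_swap[OF assms(2) f(1)] by (simp add: Int_commute inf_left_commute)
  have cS: "card S = card (S \<inter> K) + card (S - K)"
    using card_Int_Diff[OF assms(1)] by simp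
  have m: "card S * card K = card K * card (S \<inter> K) + card K * card (S - K)"
    using cS by (simp add: algebra_simps)
  show ?thesis using a1 a2 a3 s1 s2 m by linarith
qed

lemma sign_identity:
  assumes "finite S" "finite K"
  shows "blade_sign p K S * blade_sign p ((S - K) \<union> (K - S)) K =
         blade_sign p K K * (-1) ^ (card S * card K - card (S \<inter> K))"
proof -
  have pr: "(\<Prod>i\<in>K \<inter> S. gen_sq p i) * (\<Prod>i\<in>((S - K) \<union> (K - S)) \<inter> K. gen_sq p i)
          = (\<Prod>i\<in>K. gen_sq p i)"
  proof -
    have "((S - K) \<union> (K - S)) \<inter> K = K - S" by auto
    then show ?thesis using prod.Int_Diff[OF assms(2), of "gen_sq p" S] by simp
  qed
  have e: "(-1::real) ^ (invc K K + (card S * card K - card (S \<inter> K))) =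
           (-1) ^ (invc K S + invc ((S - K) \<union> (K - S)) K)"
    unfolding exp_identity[OF assms] by (simp only: power_add power_mult) simp
  have alg: "\<And>a b c d e f g::real. b*d=f \<Longrightarrow> e*g=a*c \<Longrightarrow> a*b*(c*d) = e*f*g"
  proof -
    fix a b c d e f g :: real assume h: "b*d=f" "e*g=a*c"
    have "a*b*(c*d) = (a*c)*(b*d)" by (simp only: ac_simps)
    also have "\<dots> = (e*g)*f" using h by simp
    also have "\<dots> = e*f*g" by (simp only: ac_simps)
    finally show "a*b*(c*d) = e*f*g" .
  qed
  have e2: "(-1::real) ^ invc K K * (-1) ^ (card S * card K - card (S \<inter> K)) =
           (-1) ^ invc K S * (-1) ^ invc ((S - K) \<union> (K - S)) K"
    using e by (simp only: power_add)
  have "blade_sign p K S * blade_sign p ((S - K) \<union> (K - S)) K =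
     (-1) ^ invc K S * (\<Prod>i\<in>K \<inter> S. gen_sq p i) * ((-1) ^ invc ((S - K) \<union> (K - S)) K *
      (\<Prod>i\<in>((S - K) \<union> (K - S)) \<inter> K. gen_sq p i))"
    by (simp only: sign_eq)
  also have "\<dots> = (-1) ^ invc K K * (\<Prod>i\<in>K. gen_sq p i) * (-1) ^ (card S * card K - card (S \<inter> K))"
    by (rule alg[OF pr e2])
  also have "\<dots> = blade_sign p K K * (-1) ^ (card S * card K - card (S \<inter> K))"
    by (simp only: sign_eq Int_absorb)
  finally show ?thesis .
qed

lemma sign_nz: "blade_sign p J K \<noteq> 0"
proof -
  have f: "(\<lambda>i. \<bar>gen_sq p i\<bar>) = (\<lambda>i. 1)" by (auto simp: gen_sq_def fun_eq_iff)
  have "\<bar>\<Prod>i\<in>J \<inter> K. gen_sq p i\<bar> = 1"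
    by (simp only: abs_prod f prod.neutral_const)
  then show ?thesis unfolding blade_sign_def by auto
qed

lemma blade_app: "blade K J = (if J = K then 1 else 0)" by (simp add: blade_def)

lemma fin_MI: "finite (multi_indices p q)" by (simp add: multi_indices_def)
lemma fin_el: "S \<in> multi_indices p q \<Longrightarrow> finite S"
  by (auto simp: multi_indices_def intro: finite_subset)

lemma sd_MI: "K \<in> multi_indices p q \<Longrightarrow> ((S - K) \<union> (K - S) \<in> multi_indices p q) = (S \<in> multi_indices p q)"
  by (auto simp: multi_indices_def)

lemma sd_eq: "((J - L) \<union> (L - J) = S) = (L = (J - S) \<union> (S - J))"
  unfolding set_eq_iff by (metis Diff_iff Un_iff)

lemma sd_eq2: "((J - L) \<union> (L - J) = S) = (J = (S - L) \<union> (L - S))"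
  unfolding set_eq_iff by (metis Diff_iff Un_iff)

lemma gp_left:
  assumes K: "K \<in> multi_indices p q"
  shows "gp p q (\<lambda>T. c * blade K T) X S =
    (if (K - S) \<union> (S - K) \<in> multi_indices p q
     then c * X ((K - S) \<union> (S - K)) * blade_sign p K ((K - S) \<union> (S - K)) else 0)"
proof -
  have "gp p q (\<lambda>T. c * blade K T) X S =
     (\<Sum>J\<in>multi_indices p q. if J = K then (\<Sum>L\<in>multi_indices p q.
        if (K - L) \<union> (L - K) = S then c * X L * blade_sign p K L else 0) else 0)"
    unfolding gp_def
  proof (rule sum.cong[OF refl])
    fix J assume "J \<in> multi_indices p q"
    show "(\<Sum>L\<in>multi_indices p q. if (J - L) \<union> (L - J) = S then c * blade K J * X L * blade_sign p J L else 0)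
      = (if J = K then (\<Sum>L\<in>multi_indices p q.
        if (K - L) \<union> (L - K) = S then c * X L * blade_sign p K L else 0) else 0)"
      by (cases "J = K") (simp_all add: blade_app cong: if_cong)
  qed
  also have "\<dots> = (\<Sum>L\<in>multi_indices p q.
        if (K - L) \<union> (L - K) = S then c * X L * blade_sign p K L else 0)"
    using K fin_MI by simp
  also have "\<dots> = (\<Sum>L\<in>multi_indices p q.
        if L = (K - S) \<union> (S - K) then c * X L * blade_sign p K L else 0)"
    by (rule sum.cong[OF refl]) (simp only: sd_eq)
  also have "\<dots> = (if (K - S) \<union> (S - K) \<in> multi_indices p q
     then c * X ((K - S) \<union> (S - K)) * blade_sign p K ((K - S) \<union> (S - K)) else 0)"
    using fin_MI by simp
  finally show ?thesis .
qed

lemma gp_right: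
  assumes K: "K \<in> multi_indices p q"
  shows "gp p q X (blade K) S =
    (if (S - K) \<union> (K - S) \<in> multi_indices p q
     then X ((S - K) \<union> (K - S)) * blade_sign p ((S - K) \<union> (K - S)) K else 0)"
proof -
  have "gp p q X (blade K) S =
     (\<Sum>J\<in>multi_indices p q. if (J - K) \<union> (K - J) = S then X J * blade_sign p J K else 0)"
    unfolding gp_def
  proof (rule sum.cong[OF refl])
    fix J assume "J \<in> multi_indices p q"
    have "(\<Sum>L\<in>multi_indices p q. if (J - L) \<union> (L - J) = S then X J * blade K L * blade_sign p J L else 0)
      = (\<Sum>L\<in>multi_indices p q. if L = K then (if (J - K) \<union> (K - J) = S then X J * blade_sign p J K else 0) else 0)"
      by (rule sum.cong[OF refl]) (simp add: blade_app cong: if_cong)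
    also have "\<dots> = (if (J - K) \<union> (K - J) = S then X J * blade_sign p J K else 0)"
      using K fin_MI by simp
    finally show "(\<Sum>L\<in>multi_indices p q. if (J - L) \<union> (L - J) = S then X J * blade K L * blade_sign p J L else 0)
      = (if (J - K) \<union> (K - J) = S then X J * blade_sign p J K else 0)" .
  qed
  also have "\<dots> = (\<Sum>J\<in>multi_indices p q.
        if J = (S - K) \<union> (K - S) then X J * blade_sign p J K else 0)"
    by (rule sum.cong[OF refl]) (simp only: sd_eq2)
  also have "\<dots> = (if (S - K) \<union> (K - S) \<in> multi_indices p q
     then X ((S - K) \<union> (K - S)) * blade_sign p ((S - K) \<union> (K - S)) K else 0)"
    using fin_MI by simp
  finally show ?thesis .
qed

lemma sd_invol: "(K - ((S - K) \<union> (K - S))) \<union> (((S - K) \<union> (K - S)) - K) = S"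
  by auto

lemma empty_MI: "{} \<in> multi_indices p q" by (simp add: multi_indices_def)
lemma sdK1: "((S - K) \<union> (K - S) = K) = (S = {})" by blast
lemma sdK2: "((K - S) \<union> (S - K) = K) = (S = {})" by blast

lemma mv_inv_blade:
  assumes K: "K \<in> multi_indices p q"
  shows "mv_inv p q (blade K) = (\<lambda>T. (1 / blade_sign p K K) * blade K T)"
proof -
  define Xi where "Xi = (\<lambda>T. (1 / blade_sign p K K) * blade K T)"
  have nz: "blade_sign p K K \<noteq> 0" by (rule sign_nz)
  have m: "Xi \<in> mvecs p q" using K unfolding mvecs_def Xi_def by (auto simp: blade_app)
  have r: "gp p q Xi (blade K) = blade {}"
  proof
    fix S
    show "gp p q Xi (blade K) S = blade {} S"
      unfolding gp_right[OF K] using K nz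
      by (auto simp: Xi_def blade_app sd_MI sdK1 sdK2 empty_MI)
  qed
  have l: "gp p q (blade K) Xi = blade {}"
  proof
    fix S
    have "gp p q (blade K) Xi S = gp p q (\<lambda>T. 1 * blade K T) Xi S" by simp
    also have "\<dots> = blade {} S"
      unfolding gp_left[OF K] using K nz
      by (auto simp: Xi_def blade_app sd_MI sdK1 sdK2 empty_MI)
    finally show "gp p q (blade K) Xi S = blade {} S" .
  qed
  have u: "X = Xi" if X: "X \<in> mvecs p q" "gp p q X (blade K) = blade {}" for X
  proof
    fix T
    show "X T = Xi T"
    proof (cases "T \<in> multi_indices p q")
      case False
      then have "T \<noteq> K" using K by auto
      then show ?thesis using X(1) False unfolding mvecs_def Xi_def by (simp add: blade_app)
    next
      case True
      let ?S = "(T - K) \<union> (K - T)"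
      have sd: "(?S - K) \<union> (K - ?S) = T" by auto
      have "gp p q X (blade K) ?S = blade {} ?S" using X(2) by simp
      then have e: "X T * blade_sign p T K = (if T = K then 1 else 0)"
        unfolding gp_right[OF K] sd using True by (simp add: blade_app) blast
      show ?thesis
      proof (cases "T = K")
        case True then show ?thesis using e nz by (simp add: Xi_def blade_app divide_simps)
      next
        case False then show ?thesis using e sign_nz[of p T K] by (simp add: Xi_def blade_app)
      qed
    qed
  qed
  show ?thesis unfolding mv_inv_def Xi_def[symmetric]
  proof (rule the_equality)
    show "Xi \<in> mvecs p q \<and> gp p q Xi (blade K) = blade {} \<and> gp p q (blade K) Xi = blade {}"
      using m r l by blast
  next
    fix X assume "X \<in> mvecs p q \<and> gp p q X (blade K) = blade {} \<and> gp p q (blade K) X = blade {}"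
    then show "X = Xi" using u by blast
  qed
qed

lemma card_le_prod:
  assumes "finite S" "finite K"
  shows "card (S \<inter> K) \<le> card S * card K"
proof (cases "S \<inter> K = {}")
  case True then show ?thesis by simp
next
  case False
  then have "K \<noteq> {}" by blast
  then have "card K \<ge> 1" using assms(2) by (simp add: Suc_le_eq card_gt_0_iff)
  moreover have "card (S \<inter> K) \<le> card S" using assms(1) by (simp add: card_mono)
  ultimately show ?thesis by (metis le_trans mult.right_neutral mult_le_mono2)
qed

lemma proj_blade:
  assumes K: "K \<in> multi_indices p q" and X: "X \<in> mvecs p q" and l: "l \<in> {0, 1}"
  shows "proj p q l (blade K) X = (\<lambda>S. if S \<in> cset p q K l then X S else 0)"
proof
  fix S
  define c where "c = 1 / blade_sign p K K"
  have nz: "blade_sign p K K \<noteq> 0" by (rule sign_nz)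
  let ?Y = "gp p q (mv_inv p q (blade K)) X"
  have Z: "gp p q ?Y (blade K) S =
      (if S \<in> multi_indices p q then X S * (-1) ^ (card S * card K - card (S \<inter> K)) else 0)"
  proof (cases "S \<in> multi_indices p q")
    case False
    then show ?thesis unfolding gp_right[OF K] using sd_MI[OF K, of S] by simp
  next
    case True
    have sdm: "(S - K) \<union> (K - S) \<in> multi_indices p q" using sd_MI[OF K, of S] True by simp
    have "gp p q ?Y (blade K) S = ?Y ((S - K) \<union> (K - S)) * blade_sign p ((S - K) \<union> (K - S)) K"
      unfolding gp_right[OF K] using sdm by simp
    also have "?Y ((S - K) \<union> (K - S)) = c * X S * blade_sign p K S"
      unfolding mv_inv_blade[OF K] gp_left[OF K] sd_invol c_def using True by simp
    also have "c * X S * blade_sign p K S * blade_sign p ((S - K) \<union> (K - S)) K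
        = c * X S * (blade_sign p K S * blade_sign p ((S - K) \<union> (K - S)) K)" by simp
    also have "\<dots> = X S * (-1) ^ (card S * card K - card (S \<inter> K))"
      unfolding sign_identity[OF fin_el[OF True] fin_el[OF K]] c_def using nz by simp
    finally show ?thesis using True by simp
  qed
  show "proj p q l (blade K) X S = (if S \<in> cset p q K l then X S else 0)"
  proof (cases "S \<in> multi_indices p q")
    case False
    then have "X S = 0" using X unfolding mvecs_def by auto
    then show ?thesis using False unfolding proj_def Z cset_def by simp
  next
    case True
    let ?E = "card S * card K - card (S \<inter> K)"
    have ie: "int ?E = int (card S * card K) - int (card (S \<inter> K))"
      using card_le_prod[OF fin_el[OF True] fin_el[OF K]] by simp
    have "(S \<in> cset p q K l) = ((int (card S * card K) - int (card (S \<inter> K))) mod 2 = int l)"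
      unfolding cset_def using True by simp
    also have "\<dots> = (int ?E mod 2 = int l)" unfolding ie ..
    also have "int ?E mod 2 = int (?E mod 2)" by (simp add: zmod_int)
    finally have cs: "(S \<in> cset p q K l) = (?E mod 2 = l)" by simp
    show ?thesis
    proof (cases "even ?E")
      case True
      then show ?thesis using \<open>S \<in> multi_indices p q\<close> cs l unfolding proj_def Z by auto
    next
      case False
      then have "odd ?E" by simp
      then show ?thesis using \<open>S \<in> multi_indices p q\<close> cs l unfolding proj_def Z by auto
    qed
  qed
qed

lemma fold_proj:
  assumes "length ls = length ks" "set ls \<subseteq> {0, 1}" "set ks \<subseteq> multi_indices p q"
    "X \<in> mvecs p q"
  shows "fold (\<lambda>(B, l) X. proj p q l B X) (zip (map blade ks) ls) X =
    (\<lambda>S. if (\<forall>\<nu><length ks. S \<in> cset p q (ks ! \<nu>) (ls ! \<nu>)) then X S else 0)"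
  using assms
proof (induction ks arbitrary: ls X)
  case Nil
  then show ?case by simp
next
  case (Cons K ks)
  then obtain l ls' where ls: "ls = l # ls'" by (cases ls) auto
  have K: "K \<in> multi_indices p q" and l: "l \<in> {0, 1}" using Cons.prems ls by auto
  have m: "proj p q l (blade K) X \<in> mvecs p q"
    unfolding proj_blade[OF K Cons.prems(4) l] mvecs_def cset_def by auto
  have "fold (\<lambda>(B, l) X. proj p q l B X) (zip (map blade (K # ks)) ls) X =
     fold (\<lambda>(B, l) X. proj p q l B X) (zip (map blade ks) ls') (proj p q l (blade K) X)"
    by (simp add: ls)
  also have "\<dots> = (\<lambda>S. if (\<forall>\<nu><length ks. S \<in> cset p q (ks ! \<nu>) (ls' ! \<nu>))
        then proj p q l (blade K) X S else 0)"
    by (rule Cons.IH) (use Cons.prems ls m in auto)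
  also have "\<dots> = (\<lambda>S. if (\<forall>\<nu><length (K # ks). S \<in> cset p q ((K # ks) ! \<nu>) (ls ! \<nu>)) then X S else 0)"
    unfolding proj_blade[OF K Cons.prems(4) l] ls by (auto simp: All_less_Suc2 fun_eq_iff)
  finally show ?case .
qed

lemma sum_blade:
  assumes "C \<subseteq> multi_indices p q"
  shows "(\<Sum>J\<in>C. a J * blade J S) = (if S \<in> C then a S else 0)"
proof -
  have f: "finite C" using assms fin_MI finite_subset by blast
  have "(\<Sum>J\<in>C. a J * blade J S) = (\<Sum>J\<in>C. if S = J then a J else 0)"
    by (rule sum.cong) (auto simp: blade_app)
  then show ?thesis using f by simp
qed

lemma part1:
  assumes l: "length l = length ks" and l': "length l' = length ks" and ne: "l \<noteq> l'"
  shows "cset_tuple p q ks l \<inter> cset_tuple p q ks l' = {}"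
proof -
  obtain \<nu> where nu: "\<nu> < length ks" "l ! \<nu> \<noteq> l' ! \<nu>"
    using l l' ne nth_equalityI by metis
  show ?thesis
  proof (rule ccontr)
    assume "cset_tuple p q ks l \<inter> cset_tuple p q ks l' \<noteq> {}"
    then obtain J where "J \<in> cset_tuple p q ks l" "J \<in> cset_tuple p q ks l'" by blast
    then have "J \<in> cset p q (ks ! \<nu>) (l ! \<nu>)" "J \<in> cset p q (ks ! \<nu>) (l' ! \<nu>)"
      unfolding cset_tuple_def using nu(1) by blast+
    then show False using nu(2) unfolding cset_def by simp
  qed
qed

lemma part2:
  assumes J: "J \<in> multi_indices p q"
  shows "\<exists>l. length l = length ks \<and> set l \<subseteq> {0, 1} \<and> J \<in> cset_tuple p q ks l"
proof -
  define f where "f = (\<lambda>K. (int (card J * card K) - int (card (J \<inter> K))) mod 2)"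
  define l where "l = map (\<lambda>K. nat (f K)) ks"
  have r: "f K = 0 \<or> f K = 1" for K unfolding f_def by auto
  have r2: "int (nat (f K)) = f K" for K using r[of K] by auto
  have "set l \<subseteq> {0, 1}" unfolding l_def using r by (auto simp: nat_eq_iff) (metis less_irrefl)
  moreover have "J \<in> cset_tuple p q ks l"
  proof -
    have "J \<in> cset p q (ks ! \<nu>) (l ! \<nu>)" if nu: "\<nu> < length ks" for \<nu>
    proof -
      have "int (l ! \<nu>) = f (ks ! \<nu>)" unfolding l_def using nu r2 by simp
      then show ?thesis unfolding cset_def using J by (simp only: f_def mem_Collect_eq)
    qed
    then show ?thesis unfolding cset_tuple_def using J by blast
  qed
  moreover have "length l = length ks" unfolding l_def by simp
  ultimately show ?thesis by blast
qed

theorem lemma3p11: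
  fixes p q :: nat and ks :: "nat set list" and a :: "nat set \<Rightarrow> real"
  assumes "ks \<noteq> []"
    and "\<forall>K\<in>set ks. K \<in> multi_indices p q"
  defines "A \<equiv> (\<lambda>S. \<Sum>J\<in>multi_indices p q. a J * blade J S)"
    and "Ls \<equiv> {ls :: nat list. length ls = length ks \<and> set ls \<subseteq> {0, 1}}"
  shows "(\<forall>l\<in>Ls. \<forall>l'\<in>Ls. l \<noteq> l' \<longrightarrow> cset_tuple p q ks l \<inter> cset_tuple p q ks l' = {})
       \<and> (\<Union>l\<in>Ls. cset_tuple p q ks l) = multi_indices p q
       \<and> (\<forall>l\<in>Ls. proj_tuple p q (map blade ks) l A =
            (\<lambda>S. \<Sum>J\<in>cset_tuple p q ks l. a J * blade J S))"
proof (intro conjI ballI impI)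
  fix l l' assume l: "l \<in> Ls" and l': "l' \<in> Ls" and ne: "l \<noteq> l'"
  show "cset_tuple p q ks l \<inter> cset_tuple p q ks l' = {}"
    by (rule part1) (use l l' ne in \<open>simp_all add: Ls_def\<close>)
next
  show "(\<Union>l\<in>Ls. cset_tuple p q ks l) = multi_indices p q"
  proof
    show "(\<Union>l\<in>Ls. cset_tuple p q ks l) \<subseteq> multi_indices p q"
      unfolding cset_tuple_def by blast
  next
    show "multi_indices p q \<subseteq> (\<Union>l\<in>Ls. cset_tuple p q ks l)"
    proof
      fix J assume J: "J \<in> multi_indices p q"
      from part2[OF J, of ks] obtain l where
        "length l = length ks" "set l \<subseteq> {0, 1}" "J \<in> cset_tuple p q ks l" by blast
      then show "J \<in> (\<Union>l\<in>Ls. cset_tuple p q ks l)" unfolding Ls_def by blast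
    qed
  qed
next
  fix l assume l: "l \<in> Ls"
  have Aeq: "A = (\<lambda>S. if S \<in> multi_indices p q then a S else 0)"
    unfolding A_def by (rule ext, rule sum_blade[of _ p q]) simp
  have Am: "A \<in> mvecs p q" unfolding Aeq mvecs_def by simp
  have "proj_tuple p q (map blade ks) l A =
     (\<lambda>S. if (\<forall>\<nu><length ks. S \<in> cset p q (ks ! \<nu>) (l ! \<nu>)) then A S else 0)"
    unfolding proj_tuple_def by (rule fold_proj) (use l assms(2) Am in \<open>auto simp: Ls_def\<close>)
  also have "\<dots> = (\<lambda>S. if S \<in> cset_tuple p q ks l then a S else 0)"
    unfolding Aeq cset_tuple_def by (auto simp: fun_eq_iff)
  also have "\<dots> = (\<lambda>S. \<Sum>J\<in>cset_tuple p q ks l. a J * blade J S)"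
    by (rule ext, rule sum_blade[of _ p q, symmetric]) (auto simp: cset_tuple_def)
  finally show "proj_tuple p q (map blade ks) l A = (\<lambda>S. \<Sum>J\<in>cset_tuple p q ks l. a J * blade J S)" .
qed

end
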